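(* For every $m\ge1$, the $\mathfrak g\otimes\mathbb C[t]$-module $L^{\mathrm{gr}}_m=F_m/F_{m-1}$ is generated, under the action of $U(\mathfrak g\otimes\mathbb C[t])$, by the images $\bar w_{i_1,\dots,i_m}\in F_m/F_{m-1}$ of the vectors $w_{i_1,\dots,i_m}=(e_\theta\otimes t^{i_1})\cdots(e_\theta\otimes t^{i_m})v_0$ with $-m\ge i_1\ge\cdots\ge i_m$.
   Context: $\mathfrak g$ is a finite-dimensional simple complex Lie algebra, $\hat{\mathfrak g}$ its affine Kac–Moody algebra, $L$ the basic representation with highest weight vector $v_0$: $(\mathfrak g\otimes\mathbb C[t])v_0=0$, $L=U(\mathfrak g\otimes t^{-1}\mathbb C[t^{-1}])v_0$. $\theta$ is the highest root and $e_\theta$ a highest weight vector of the adjoint representation. PBW filtration: $F_{-1}=0$, $F_0=\mathbb Cv_0$, $F_{m+1}=F_m+\mathrm{span}\{(x\otimes t^{-i})w: x\in\mathfrak g,i>0,w\in F_m\}$; each $F_m$ is $\mathfrak g\otimes\mathbb C[t]$-stable, giving a $\mathfrak g\otimes\mathbb C[t]$-module structure on $F_m/F_{m-1}$. *)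

theory Defs
  imports Complex_Main
begin

definition lie_algebra :: "(complex \<Rightarrow> 'g::ab_group_add \<Rightarrow> 'g) \<Rightarrow> ('g \<Rightarrow> 'g \<Rightarrow> 'g) \<Rightarrow> bool" where
  "lie_algebra sc br \<longleftrightarrow> vector_space sc
     \<and> (\<forall>a b x y z. br (sc a x + sc b y) z = sc a (br x z) + sc b (br y z))
     \<and> (\<forall>a b x y z. br z (sc a x + sc b y) = sc a (br z x) + sc b (br z y))
     \<and> (\<forall>x. br x x = 0)
     \<and> (\<forall>x y z. br x (br y z) + br y (br z x) + br z (br x y) = 0)"

definition fin_dim :: "(complex \<Rightarrow> 'g::ab_group_add \<Rightarrow> 'g) \<Rightarrow> bool" where
  "fin_dim sc \<longleftrightarrow> (\<exists>B. finite B \<and> module.span sc B = UNIV)"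

definition lie_subalgebra :: "(complex \<Rightarrow> 'g::ab_group_add \<Rightarrow> 'g) \<Rightarrow> ('g \<Rightarrow> 'g \<Rightarrow> 'g) \<Rightarrow> 'g set \<Rightarrow> bool" where
  "lie_subalgebra sc br S \<longleftrightarrow> module.subspace sc S \<and> (\<forall>x\<in>S. \<forall>y\<in>S. br x y \<in> S)"

definition lie_ideal :: "(complex \<Rightarrow> 'g::ab_group_add \<Rightarrow> 'g) \<Rightarrow> ('g \<Rightarrow> 'g \<Rightarrow> 'g) \<Rightarrow> 'g set \<Rightarrow> bool" where
  "lie_ideal sc br I \<longleftrightarrow> module.subspace sc I \<and> (\<forall>x. \<forall>y\<in>I. br x y \<in> I)"

definition simple_lie_algebra :: "(complex \<Rightarrow> 'g::ab_group_add \<Rightarrow> 'g) \<Rightarrow> ('g \<Rightarrow> 'g \<Rightarrow> 'g) \<Rightarrow> bool" where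
  "simple_lie_algebra sc br \<longleftrightarrow> lie_algebra sc br
     \<and> (\<exists>x y. br x y \<noteq> 0)
     \<and> (\<forall>I. lie_ideal sc br I \<longrightarrow> I = {0} \<or> I = UNIV)"

definition derived :: "(complex \<Rightarrow> 'g::ab_group_add \<Rightarrow> 'g) \<Rightarrow> ('g \<Rightarrow> 'g \<Rightarrow> 'g) \<Rightarrow> 'g set \<Rightarrow> 'g set" where
  "derived sc br S = module.span sc {br x y | x y. x \<in> S \<and> y \<in> S}"

definition solvable_subalgebra :: "(complex \<Rightarrow> 'g::ab_group_add \<Rightarrow> 'g) \<Rightarrow> ('g \<Rightarrow> 'g \<Rightarrow> 'g) \<Rightarrow> 'g set \<Rightarrow> bool" where
  "solvable_subalgebra sc br S \<longleftrightarrow> lie_subalgebra sc br S \<and> (\<exists>n. (derived sc br ^^ n) S = {0})"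

definition borel_subalgebra :: "(complex \<Rightarrow> 'g::ab_group_add \<Rightarrow> 'g) \<Rightarrow> ('g \<Rightarrow> 'g \<Rightarrow> 'g) \<Rightarrow> 'g set \<Rightarrow> bool" where
  "borel_subalgebra sc br B \<longleftrightarrow> solvable_subalgebra sc br B
     \<and> (\<forall>S. solvable_subalgebra sc br S \<and> B \<subseteq> S \<longrightarrow> S = B)"

text \<open>A highest weight vector of the adjoint representation (with respect to some
  Borel subalgebra b, i.e. some choice of Cartan and positive roots): a nonzero
  vector whose line is stable under ad b.  For simple g these are exactly the
  nonzero highest root vectors e_theta.\<close>
definition highest_root_vector :: "(complex \<Rightarrow> 'g::ab_group_add \<Rightarrow> 'g) \<Rightarrow> ('g \<Rightarrow> 'g \<Rightarrow> 'g) \<Rightarrow> 'g \<Rightarrow> bool" where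
  "highest_root_vector sc br e \<longleftrightarrow> e \<noteq> 0 \<and>
     (\<exists>B. borel_subalgebra sc br B \<and> (\<forall>x\<in>B. \<exists>c. br x e = sc c e))"

text \<open>Normalized invariant form: symmetric, bilinear, invariant, and normalized by
  (theta,theta) = 2, i.e. kappa(e_theta, f_theta) = 1 for an sl2-triple
  (e_theta, [e_theta,f_theta], f_theta).\<close>
definition normalized_invariant_form ::
  "(complex \<Rightarrow> 'g::ab_group_add \<Rightarrow> 'g) \<Rightarrow> ('g \<Rightarrow> 'g \<Rightarrow> 'g) \<Rightarrow> 'g \<Rightarrow> ('g \<Rightarrow> 'g \<Rightarrow> complex) \<Rightarrow> bool" where
  "normalized_invariant_form sc br e \<kappa> \<longleftrightarrow>
     (\<forall>a b x y z. \<kappa> (sc a x + sc b y) z = a * \<kappa> x z + b * \<kappa> y z)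
     \<and> (\<forall>x y. \<kappa> x y = \<kappa> y x)
     \<and> (\<forall>x y z. \<kappa> (br x y) z = \<kappa> x (br y z))
     \<and> (\<exists>f. br (br e f) e = sc 2 e \<and> br (br e f) f = sc (-2) f \<and> \<kappa> e f = 1)"

text \<open>The basic representation of the affine algebra: operators rho x n = x \<otimes> t^n
  on L (complex vector space with scalar multiplication scv), central element
  acting by 1 (level 1), vacuum vector v0 killed by g \<otimes> C[t], L irreducible.\<close>
definition basic_rep ::
  "(complex \<Rightarrow> 'g::ab_group_add \<Rightarrow> 'g) \<Rightarrow> ('g \<Rightarrow> 'g \<Rightarrow> 'g) \<Rightarrow> ('g \<Rightarrow> 'g \<Rightarrow> complex)
   \<Rightarrow> (complex \<Rightarrow> 'v::ab_group_add \<Rightarrow> 'v) \<Rightarrow> ('g \<Rightarrow> int \<Rightarrow> 'v \<Rightarrow> 'v) \<Rightarrow> 'v \<Rightarrow> bool" where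
  "basic_rep sc br \<kappa> scv \<rho> v0 \<longleftrightarrow> vector_space scv
     \<and> (\<forall>x n a b u w. \<rho> x n (scv a u + scv b w) = scv a (\<rho> x n u) + scv b (\<rho> x n w))
     \<and> (\<forall>x y n a b u. \<rho> (sc a x + sc b y) n u = scv a (\<rho> x n u) + scv b (\<rho> y n u))
     \<and> (\<forall>x y m n u. \<rho> x m (\<rho> y n u) - \<rho> y n (\<rho> x m u)
           = \<rho> (br x y) (m + n) u + (if m + n = 0 then scv (of_int m * \<kappa> x y) u else 0))
     \<and> v0 \<noteq> 0
     \<and> (\<forall>x n. n \<ge> 0 \<longrightarrow> \<rho> x n v0 = 0)
     \<and> (\<forall>W. module.subspace scv W \<and> (\<forall>x n. \<forall>w\<in>W. \<rho> x n w \<in> W) \<longrightarrow> W = {0} \<or> W = UNIV)"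

definition apply_word :: "('g \<Rightarrow> int \<Rightarrow> 'v \<Rightarrow> 'v) \<Rightarrow> ('g \<times> int) list \<Rightarrow> 'v \<Rightarrow> 'v" where
  "apply_word \<rho> ws v = foldr (\<lambda>(x, n) u. \<rho> x n u) ws v"

fun pbw_filt :: "(complex \<Rightarrow> 'v::ab_group_add \<Rightarrow> 'v) \<Rightarrow> ('g \<Rightarrow> int \<Rightarrow> 'v \<Rightarrow> 'v) \<Rightarrow> 'v \<Rightarrow> nat \<Rightarrow> 'v set" where
  "pbw_filt scv \<rho> v0 0 = module.span scv {v0}"
| "pbw_filt scv \<rho> v0 (Suc m) =
     module.span scv (pbw_filt scv \<rho> v0 m \<union> {\<rho> x n w | x n w. n < 0 \<and> w \<in> pbw_filt scv \<rho> v0 m})"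

definition w_vec :: "('g \<Rightarrow> int \<Rightarrow> 'v \<Rightarrow> 'v) \<Rightarrow> 'g \<Rightarrow> 'v \<Rightarrow> int list \<Rightarrow> 'v" where
  "w_vec \<rho> e v0 is = apply_word \<rho> (map (\<lambda>i. (e, i)) is) v0"

end

theory Submission
  imports Defs
begin

lemma abs_le_sumabs:
  fixes ws :: "('g \<times> int) list"
  shows "q \<in> set ws \<Longrightarrow> \<bar>snd q\<bar> \<le> (\<Sum>p\<leftarrow>ws. \<bar>snd p\<bar>)"
proof (induction ws)
  case Nil then show ?case by simp
next
  case (Cons a ws)
  have "0 \<le> (\<Sum>p\<leftarrow>ws. \<bar>snd p\<bar>)" by (induction ws) auto
  then show ?case using Cons by auto
qed

lemma sumabs_nonneg: "0 \<le> (\<Sum>p\<leftarrow>ws. \<bar>snd p\<bar>::int)"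
  by (induction ws) auto

lemma aw_Nil[simp]: "apply_word \<rho> [] v = v"
  by (simp add: apply_word_def)

lemma aw_Cons[simp]: "apply_word \<rho> ((x,n)#ws) v = \<rho> x n (apply_word \<rho> ws v)"
  by (simp add: apply_word_def)

lemma aw_append: "apply_word \<rho> (ws1 @ ws2) v = apply_word \<rho> ws1 (apply_word \<rho> ws2 v)"
  by (simp add: apply_word_def)

locale ctx = V: vector_space scv + G: vector_space sc
  for scv :: "complex \<Rightarrow> 'v::ab_group_add \<Rightarrow> 'v" and sc :: "complex \<Rightarrow> 'g::ab_group_add \<Rightarrow> 'g" +
  fixes br :: "'g \<Rightarrow> 'g \<Rightarrow> 'g" and \<kappa> :: "'g \<Rightarrow> 'g \<Rightarrow> complex"
    and \<rho> :: "'g \<Rightarrow> int \<Rightarrow> 'v \<Rightarrow> 'v" and v0 :: 'v and e h :: 'g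
  assumes lin_v: "\<And>x n a b u w. \<rho> x n (scv a u + scv b w) = scv a (\<rho> x n u) + scv b (\<rho> x n w)"
    and lin_g: "\<And>x y n a b u. \<rho> (sc a x + sc b y) n u = scv a (\<rho> x n u) + scv b (\<rho> y n u)"
    and comm: "\<And>x y m n u. \<rho> x m (\<rho> y n u) - \<rho> y n (\<rho> x m u)
           = \<rho> (br x y) (m + n) u + (if m + n = 0 then scv (of_int m * \<kappa> x y) u else 0)"
    and kill: "\<And>x n. n \<ge> 0 \<Longrightarrow> \<rho> x n v0 = 0"
    and he: "br h e = sc 2 e"
    and enz: "e \<noteq> 0"
    and ideal: "\<And>W. lie_ideal sc br W \<Longrightarrow> W = {0} \<or> W = UNIV"
begin

abbreviation F where "F j \<equiv> pbw_filt scv \<rho> v0 j"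
abbreviation aw where "aw ws \<equiv> apply_word \<rho> ws v0"

declare pbw_filt.simps[simp del]

lemma F0: "F 0 = V.span {v0}" by (simp add: pbw_filt.simps)
lemma FS: "F (Suc j) = V.span (F j \<union> {\<rho> x n w | x n w. n < 0 \<and> w \<in> F j})"
  by (simp add: pbw_filt.simps)

lemma rho_add: "\<rho> x n (u + w) = \<rho> x n u + \<rho> x n w"
  using lin_v[of x n 1 u 1 w] by simp

lemma rho_scale: "\<rho> x n (scv c u) = scv c (\<rho> x n u)"
  using lin_v[of x n c u 0 0] by simp

lemma rho_zero: "\<rho> x n 0 = 0"
  using rho_scale[of x n 0 0] by simp

lemma rho_diff: "\<rho> x n (u - w) = \<rho> x n u - \<rho> x n w"
  using lin_v[of x n 1 u "-1" w] by simp

lemma comm': "\<rho> x m (\<rho> y n u) = \<rho> y n (\<rho> x m u) + \<rho> (br x y) (m + n) u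
      + (if m + n = 0 then scv (of_int m * \<kappa> x y) u else 0)"
  using comm[of x m y n u] by (simp add: algebra_simps diff_eq_eq)

lemma F_sub: "V.subspace (F j)"
  by (cases j) (auto simp: F0 FS)

lemma F_mono: "F j \<subseteq> F (Suc j)"
  unfolding FS by (auto intro: V.span_base)

lemma F_mono_le: "i \<le> j \<Longrightarrow> F i \<subseteq> F j"
  using lift_Suc_mono_le[of "\<lambda>j. F j", OF F_mono] by blast

lemma F_neg: "n < 0 \<Longrightarrow> w \<in> F j \<Longrightarrow> \<rho> x n w \<in> F (Suc j)"
  unfolding FS by (auto intro!: V.span_base)

lemma cent: "u \<in> F j \<Longrightarrow> (if b then scv c u else 0) \<in> F j"
  using F_sub V.subspace_scale V.subspace_0 by auto

lemma pre_sub: "V.subspace S \<Longrightarrow> V.subspace {u. \<rho> x n u \<in> S}"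
  by (rule V.subspaceI) (auto simp: rho_zero rho_add rho_scale V.subspace_0 V.subspace_add V.subspace_scale)

lemma stab: "n \<ge> 0 \<Longrightarrow> u \<in> F j \<Longrightarrow> \<rho> x n u \<in> F j"
proof (induction j arbitrary: x n u)
  case 0
  then have "u \<in> V.span {v0}" by (simp add: F0)
  then have "u \<in> {u. \<rho> x n u \<in> F 0}"
  proof (induction rule: V.span_induct)
    case base show ?case using pre_sub[OF F_sub] by simp
  next
    case (step w) then show ?case using kill[OF \<open>n \<ge> 0\<close>] F_sub V.subspace_0 by auto
  qed
  then show ?case by simp
next
  case (Suc j)
  have "u \<in> V.span (F j \<union> {\<rho> y t w | y t w. t < 0 \<and> w \<in> F j})" using Suc.prems by (simp add: FS)
  then have "u \<in> {u. \<rho> x n u \<in> F (Suc j)}"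
  proof (induction rule: V.span_induct)
    case base show ?case using pre_sub[OF F_sub] by simp
  next
    case (step w)
    show ?case
    proof (cases "w \<in> F j")
      case True then show ?thesis using Suc.IH[OF Suc.prems(1)] F_mono by auto
    next
      case False
      with step obtain y t w' where w: "w = \<rho> y t w'" "t < 0" "w' \<in> F j" by auto
      have a: "\<rho> y t (\<rho> x n w') \<in> F (Suc j)" using F_neg[OF w(2) Suc.IH[OF Suc.prems(1) w(3)]] .
      have b: "\<rho> (br x y) (n + t) w' \<in> F (Suc j)"
      proof (cases "n + t < 0")
        case True then show ?thesis using F_neg[of "n+t" w' j "br x y"] w(3) by simp
      next
        case False then show ?thesis using Suc.IH[of "n+t" w'] w(3) F_mono by auto
      qed
      have c: "(if n + t = 0 then scv (of_int n * \<kappa> x y) w' else 0) \<in> F (Suc j)"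
        using cent w(3) F_mono by blast
      have "\<rho> x n (\<rho> y t w') \<in> F (Suc j)"
        by (subst comm') (intro V.subspace_add[OF F_sub] a b c)
      then show ?thesis unfolding w(1) by simp
    qed
  qed
  then show ?case by simp
qed

lemma word_F: "\<forall>p\<in>set ws. snd p < 0 \<Longrightarrow> aw ws \<in> F (length ws)"
proof (induction ws)
  case Nil then show ?case by (simp add: V.span_base F0)
next
  case (Cons p ws)
  obtain z r where p: "p = (z,r)" by (cases p)
  have "aw ws \<in> F (length ws)" "r < 0" using Cons p by auto
  then show ?case using F_neg[of r "aw ws" "length ws" z] p by simp
qed

lemma lift: "u \<in> F (L - 1) \<Longrightarrow> (L = 0 \<Longrightarrow> u = 0) \<Longrightarrow> s < 0 \<Longrightarrow> \<rho> y s u \<in> F L"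
  by (cases L) (auto simp: rho_zero F_sub V.subspace_0 intro: F_neg)

lemma lemA: "k \<ge> 0 \<Longrightarrow> \<forall>p\<in>set ws. snd p < 0 \<and> snd p + k \<ge> 0 \<Longrightarrow>
   \<rho> a k (aw ws) \<in> F (length ws - 1) \<and> (ws = [] \<longrightarrow> \<rho> a k (aw ws) = 0)"
proof (induction ws)
  case Nil then show ?case using kill F_sub V.subspace_0 by auto
next
  case (Cons p ws)
  obtain z r where p: "p = (z,r)" by (cases p)
  have u: "aw ws \<in> F (length ws)" using word_F Cons.prems by auto
  have r: "r < 0" "r + k \<ge> 0" using Cons.prems p by auto
  have ih: "\<rho> a k (aw ws) \<in> F (length ws - 1)" "length ws = 0 \<Longrightarrow> \<rho> a k (aw ws) = 0"
    using Cons.IH Cons.prems by auto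
  have a: "\<rho> z r (\<rho> a k (aw ws)) \<in> F (length ws)"
    using lift[OF ih(1) ih(2) r(1)] .
  have b: "\<rho> (br a z) (k + r) (aw ws) \<in> F (length ws)" using stab u r by auto
  have c: "(if k + r = 0 then scv (of_int k * \<kappa> a z) (aw ws) else 0) \<in> F (length ws)"
    using cent u by blast
  show ?case using a b c F_sub[of "length ws"] V.subspace_add p
    by (simp add: comm'[of a k z r])
qed

lemma lemB: "k \<ge> 0 \<Longrightarrow> \<forall>p\<in>set ws1 \<union> set ws2. snd p < 0 \<and> snd p + k \<ge> 0 \<Longrightarrow> s < 0 \<Longrightarrow> s + k < 0 \<Longrightarrow>
  \<rho> a k (aw (ws1 @ (y,s) # ws2)) - aw (ws1 @ (br a y, s + k) # ws2) \<in> F (length ws1 + length ws2)"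
proof (induction ws1)
  case Nil
  have ih: "\<rho> a k (aw ws2) \<in> F (length ws2 - 1)" "length ws2 = 0 \<Longrightarrow> \<rho> a k (aw ws2) = 0"
    using lemA[OF Nil(1), of ws2 a] Nil by auto
  have a: "\<rho> y s (\<rho> a k (aw ws2)) \<in> F (length ws2)"
    using lift[OF ih(1) ih(2) Nil(3)] .
  show ?case using a Nil(4) by (simp add: comm'[of a k y s] add.commute)
next
  case (Cons p ws1)
  obtain z r where p: "p = (z,r)" by (cases p)
  let ?u = "aw (ws1 @ (y,s) # ws2)"
  let ?T = "aw (ws1 @ (br a y, s + k) # ws2)"
  let ?L = "length ws1 + length ws2"
  have u: "?u \<in> F (Suc ?L)" using word_F[of "ws1 @ (y,s) # ws2"] Cons.prems by auto
  have r: "r < 0" "r + k \<ge> 0" using Cons.prems p by auto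
  have a: "\<rho> z r (\<rho> a k ?u - ?T) \<in> F (Suc ?L)"
    using Cons.IH Cons.prems r by (auto intro: F_neg)
  have b: "\<rho> (br a z) (k + r) ?u \<in> F (Suc ?L)" using stab u r by auto
  have c: "(if k + r = 0 then scv (of_int k * \<kappa> a z) ?u else 0) \<in> F (Suc ?L)"
    using cent u by blast
  have eq: "\<rho> a k (aw (p # ws1 @ (y,s) # ws2)) - aw (p # ws1 @ (br a y, s + k) # ws2)
     = \<rho> z r (\<rho> a k ?u - ?T) + \<rho> (br a z) (k + r) ?u + (if k + r = 0 then scv (of_int k * \<kappa> a z) ?u else 0)"
    by (simp add: p comm'[of a k z r] rho_diff algebra_simps)
  show ?case unfolding append_Cons eq using a b c F_sub[of "Suc ?L"] V.subspace_add by simp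
qed

lemma aw_slot_lin: "apply_word \<rho> (ws1 @ (sc a x + sc b y, t) # ws2) v
   = scv a (apply_word \<rho> (ws1 @ (x,t) # ws2) v) + scv b (apply_word \<rho> (ws1 @ (y,t) # ws2) v)"
proof (induction ws1)
  case Nil then show ?case by (simp add: lin_g)
next
  case (Cons p ws1) then show ?case by (cases p) (simp add: lin_v)
qed

abbreviation E where "E \<equiv> (\<lambda>i::int. (e, i))"

definition Gs :: "nat \<Rightarrow> 'v set" where
 "Gs m = {apply_word \<rho> ws (w_vec \<rho> e v0 is) | ws is.
          (\<forall>p\<in>set ws. snd p \<ge> 0) \<and> length is = m \<and> sorted_wrt (\<ge>) is
          \<and> (\<forall>i\<in>set is. i \<le> - int m)}"

abbreviation N where "N m \<equiv> V.span (F (m - 1) \<union> Gs m)"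

lemma N_stab: "n \<ge> 0 \<Longrightarrow> u \<in> N m \<Longrightarrow> \<rho> x n u \<in> N m"
proof -
  assume n: "n \<ge> 0" and u: "u \<in> N m"
  from u have "u \<in> {u. \<rho> x n u \<in> N m}"
  proof (induction rule: V.span_induct)
    case base show ?case using pre_sub[OF V.subspace_span] by simp
  next
    case (step w)
    show ?case
    proof (cases "w \<in> F (m - 1)")
      case True then show ?thesis using stab[OF n] by (auto intro: V.span_base)
    next
      case False
      with step obtain ws "is" where w: "w = apply_word \<rho> ws (w_vec \<rho> e v0 is)"
        "\<forall>p\<in>set ws. snd p \<ge> 0" "length is = m" "sorted_wrt (\<ge>) is" "\<forall>i\<in>set is. i \<le> - int m"
        unfolding Gs_def by blast
      have "\<rho> x n w = apply_word \<rho> ((x,n)#ws) (w_vec \<rho> e v0 is)" using w(1) by simp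
      moreover have "apply_word \<rho> ((x,n)#ws) (w_vec \<rho> e v0 is) \<in> Gs m"
        unfolding Gs_def using w n by fastforce
      ultimately show ?thesis by (auto intro: V.span_base)
    qed
  qed
  then show ?thesis by simp
qed

lemma raise:
  assumes k: "k \<ge> 0" and q: "\<forall>q\<in>set (map E is @ vs'). snd q < 0 \<and> snd q + k \<ge> 0"
    and t: "t < 0" and len: "length is + length vs' = m - 1"
    and src: "aw (map E is @ (y, t - k) # vs') \<in> N m"
  shows "aw (map E is @ (br a y, t) # vs') \<in> N m"
proof -
  have d: "\<rho> a k (aw (map E is @ (y, t - k) # vs')) - aw (map E is @ (br a y, t - k + k) # vs')
      \<in> F (length (map E is) + length vs')"
    by (rule lemB) (use k q t in auto)
  then have d': "\<rho> a k (aw (map E is @ (y, t - k) # vs')) - aw (map E is @ (br a y, t) # vs') \<in> N m"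
    using len by (auto intro: V.span_base)
  have r: "\<rho> a k (aw (map E is @ (y, t - k) # vs')) \<in> N m" using N_stab[OF k src] .
  have "aw (map E is @ (br a y, t) # vs') = \<rho> a k (aw (map E is @ (y, t - k) # vs'))
     - (\<rho> a k (aw (map E is @ (y, t - k) # vs')) - aw (map E is @ (br a y, t) # vs'))" by simp
  then show ?thesis using V.span_diff[OF r d'] by metis
qed

lemma slot_zero: "apply_word \<rho> (ws1 @ (0, t) # ws2) v = 0"
  using aw_slot_lin[of ws1 0 0 0 0 t ws2 v] by simp

lemma claimC:
  assumes m: "m \<ge> 1"
  shows "p \<le> m \<Longrightarrow> \<forall>is vs. length is = m - p \<longrightarrow> length vs = p \<longrightarrow> sorted_wrt (\<ge>) is
     \<longrightarrow> (\<forall>i\<in>set is. i \<le> - int m) \<longrightarrow> (\<forall>q\<in>set vs. snd q < 0) \<longrightarrow> aw (map E is @ vs) \<in> N m"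
proof (induction p)
  case 0
  show ?case
  proof (intro allI impI)
    fix "is" :: "int list" and vs :: "('g \<times> int) list"
    assume h: "length is = m - 0" "length vs = 0" "sorted_wrt (\<ge>) is" "\<forall>i\<in>set is. i \<le> - int m"
    have "aw (map E is @ vs) = apply_word \<rho> [] (w_vec \<rho> e v0 is)" using h(2)
      by (simp add: w_vec_def)
    moreover have "apply_word \<rho> [] (w_vec \<rho> e v0 is) \<in> Gs m" unfolding Gs_def using h by fastforce
    ultimately show "aw (map E is @ vs) \<in> N m" by (auto intro: V.span_base)
  qed
next
  case (Suc p)
  have IH: "\<And>is vs. length is = m - p \<Longrightarrow> length vs = p \<Longrightarrow> sorted_wrt (\<ge>) is \<Longrightarrow>
     (\<forall>i\<in>set is. i \<le> - int m) \<Longrightarrow> (\<forall>q\<in>set vs. snd q < 0) \<Longrightarrow> aw (map E is @ vs) \<in> N m"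
    using Suc by auto
  define W where "W = {x. \<forall>t is vs'. t < 0 \<longrightarrow> length is = m - Suc p \<longrightarrow> length vs' = p
     \<longrightarrow> sorted_wrt (\<ge>) is \<longrightarrow> (\<forall>i\<in>set is. i \<le> - int m) \<longrightarrow> (\<forall>q\<in>set vs'. snd q < 0)
     \<longrightarrow> aw (map E is @ (x, t) # vs') \<in> N m}"
  have gen: "aw (map E is @ (br a y, t) # vs') \<in> N m"
    if h: "t < 0" "length is = m - Suc p" "length vs' = p" "sorted_wrt (\<ge>) is"
      "\<forall>i\<in>set is. i \<le> - int m" "\<forall>q\<in>set vs'. snd q < 0"
      and src: "\<And>k. k = (\<Sum>q\<leftarrow>map E is @ vs'. \<bar>snd q\<bar>) + int m + 1 \<Longrightarrow>
          aw (map E is @ (y, t - k) # vs') \<in> N m"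
    for a y t "is" vs'
  proof -
    define B where "B = (\<Sum>q\<leftarrow>map E is @ vs'. \<bar>snd q\<bar>)"
    define k where "k = B + int m + 1"
    have B0: "0 \<le> B" unfolding B_def by (rule sumabs_nonneg)
    have qb: "\<forall>q\<in>set (map E is @ vs'). snd q < 0 \<and> snd q + k \<ge> 0"
    proof
      fix q assume q: "q \<in> set (map E is @ vs')"
      have "\<bar>snd q\<bar> \<le> B" unfolding B_def by (rule abs_le_sumabs[OF q])
      moreover have "snd q < 0" using q h(5,6) m by auto
      ultimately show "snd q < 0 \<and> snd q + k \<ge> 0" unfolding k_def by auto
    qed
    show ?thesis
      by (rule raise[of k]) (use qb h Suc.prems src k_def B_def B0 in auto)
  qed
  have eW: "e \<in> W" unfolding W_def mem_Collect_eq
  proof (intro allI impI)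
    fix t :: int and "is" :: "int list" and vs' :: "('g \<times> int) list"
    assume h: "t < (0::int)" "length is = m - Suc p" "length vs' = p" "sorted_wrt (\<ge>) is"
      "\<forall>i\<in>set is. i \<le> - int m" "\<forall>q\<in>set vs'. snd q < 0"
    have g: "aw (map E is @ (br h e, t) # vs') \<in> N m"
    proof (rule gen[OF h])
      fix k assume k: "k = (\<Sum>q\<leftarrow>map E is @ vs'. \<bar>snd q\<bar>) + int m + 1"
      have kb: "\<forall>i\<in>set is. t - k < i"
      proof
        fix i assume i: "i \<in> set is"
        have "(e,i) \<in> set (map E is @ vs')" using i by auto
        from abs_le_sumabs[OF this] have "\<bar>i\<bar> \<le> (\<Sum>q\<leftarrow>map E is @ vs'. \<bar>snd q\<bar>)" by simp
        then show "t - k < i" using k h(1) by auto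
      qed
      have "aw (map E (is @ [t - k]) @ vs') \<in> N m"
      proof (rule IH)
        show "length (is @ [t - k]) = m - p" using h(2) Suc.prems by auto
        show "sorted_wrt (\<ge>) (is @ [t - k])" using h(4) kb by (auto simp: sorted_wrt_append)
        have "0 \<le> (\<Sum>q\<leftarrow>map E is @ vs'. \<bar>snd q\<bar>)" by (rule sumabs_nonneg)
        then show "\<forall>i\<in>set (is @ [t - k]). i \<le> - int m" using h(5) k h(1) by auto
      qed (use h in auto)
      then show "aw (map E is @ (e, t - k) # vs') \<in> N m" by simp
    qed
    have "aw (map E is @ (br h e, t) # vs') = scv 2 (aw (map E is @ (e, t) # vs'))"
      using aw_slot_lin[of "map E is" 2 e 0 e t vs' v0] by (simp add: he)
    with g have "scv (1/2) (scv 2 (aw (map E is @ (e, t) # vs'))) \<in> N m"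
      by (metis V.span_scale)
    then show "aw (map E is @ (e, t) # vs') \<in> N m" by simp
  qed
  have sub: "G.subspace W"
  proof (rule G.subspaceI)
    show "0 \<in> W" unfolding W_def by (simp add: slot_zero V.span_zero)
  next
    fix x y assume xy: "x \<in> W" "y \<in> W"
    show "x + y \<in> W" unfolding W_def mem_Collect_eq
    proof (intro allI impI)
      fix t :: int and "is" :: "int list" and vs' :: "('g \<times> int) list"
      assume h: "t < (0::int)" "length is = m - Suc p" "length vs' = p" "sorted_wrt (\<ge>) is"
        "\<forall>i\<in>set is. i \<le> - int m" "\<forall>q\<in>set vs'. snd q < 0"
      have "aw (map E is @ (x + y, t) # vs') = aw (map E is @ (x, t) # vs') + aw (map E is @ (y, t) # vs')"
        using aw_slot_lin[of "map E is" 1 x 1 y t vs' v0] by simp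
      moreover have "aw (map E is @ (x, t) # vs') \<in> N m" "aw (map E is @ (y, t) # vs') \<in> N m"
        using xy h unfolding W_def by blast+
      ultimately show "aw (map E is @ (x + y, t) # vs') \<in> N m" using V.span_add by metis
    qed
  next
    fix c x assume xW: "x \<in> W"
    show "sc c x \<in> W" unfolding W_def mem_Collect_eq
    proof (intro allI impI)
      fix t :: int and "is" :: "int list" and vs' :: "('g \<times> int) list"
      assume h: "t < (0::int)" "length is = m - Suc p" "length vs' = p" "sorted_wrt (\<ge>) is"
        "\<forall>i\<in>set is. i \<le> - int m" "\<forall>q\<in>set vs'. snd q < 0"
      have "aw (map E is @ (sc c x, t) # vs') = scv c (aw (map E is @ (x, t) # vs'))"
        using aw_slot_lin[of "map E is" c x 0 x t vs' v0] by simp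
      moreover have "aw (map E is @ (x, t) # vs') \<in> N m"
        using xW h unfolding W_def by blast
      ultimately show "aw (map E is @ (sc c x, t) # vs') \<in> N m" using V.span_scale by metis
    qed
  qed
  have br: "br a y \<in> W" if "y \<in> W" for a y
    unfolding W_def mem_Collect_eq
  proof (intro allI impI)
    fix t :: int and "is" :: "int list" and vs' :: "('g \<times> int) list"
    assume h: "t < (0::int)" "length is = m - Suc p" "length vs' = p" "sorted_wrt (\<ge>) is"
      "\<forall>i\<in>set is. i \<le> - int m" "\<forall>q\<in>set vs'. snd q < 0"
    show "aw (map E is @ (br a y, t) # vs') \<in> N m"
    proof (rule gen[OF h])
      fix k assume k: "k = (\<Sum>q\<leftarrow>map E is @ vs'. \<bar>snd q\<bar>) + int m + 1"
      have "0 \<le> (\<Sum>q\<leftarrow>map E is @ vs'. \<bar>snd q\<bar>)" by (rule sumabs_nonneg)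
      then have "t - k < 0" using k h(1) by auto
      then show "aw (map E is @ (y, t - k) # vs') \<in> N m" using that h unfolding W_def by blast
    qed
  qed
  have "lie_ideal sc br W" unfolding lie_ideal_def using sub br by blast
  then have WU: "W = UNIV" using ideal eW enz by blast
  show ?case
  proof (intro allI impI)
    fix "is" :: "int list" and vs :: "('g \<times> int) list"
    assume h: "length is = m - Suc p" "length vs = Suc p" "sorted_wrt (\<ge>) is" "\<forall>i\<in>set is. i \<le> - int m"
       "\<forall>q\<in>set vs. snd q < 0"
    then obtain x t vs' where vs: "vs = (x,t) # vs'" by (cases vs) auto
    have "x \<in> W" using WU by simp
    then show "aw (map E is @ vs) \<in> N m" unfolding W_def using h vs by auto
  qed
qed

lemma F_words: "F j \<subseteq> V.span {aw ws | ws. (\<forall>p\<in>set ws. snd p < 0) \<and> length ws \<le> j}"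
proof (induction j)
  case 0
  have "v0 = aw []" by simp
  then have "v0 \<in> {aw ws | ws. (\<forall>p\<in>set ws. snd p < 0) \<and> length ws \<le> 0}" by force
  then show ?case unfolding F0 by (intro V.span_mono) auto
next
  case (Suc j)
  let ?S = "V.span {aw ws | ws. (\<forall>p\<in>set ws. snd p < 0) \<and> length ws \<le> Suc j}"
  have m: "V.span {aw ws | ws. (\<forall>p\<in>set ws. snd p < 0) \<and> length ws \<le> j} \<subseteq> ?S"
    by (rule V.span_mono) auto
  have "\<rho> x n w \<in> ?S" if "n < 0" "w \<in> F j" for x n w
  proof -
    have "w \<in> V.span {aw ws | ws. (\<forall>p\<in>set ws. snd p < 0) \<and> length ws \<le> j}" using Suc that by auto
    then have "w \<in> {w. \<rho> x n w \<in> ?S}"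
    proof (induction rule: V.span_induct)
      case base show ?case using pre_sub[OF V.subspace_span] by simp
    next
      case (step u)
      then obtain ws where "u = aw ws" "\<forall>p\<in>set ws. snd p < 0" "length ws \<le> j" by auto
      then have "\<rho> x n u = aw ((x,n)#ws)" "\<forall>p\<in>set ((x,n)#ws). snd p < 0" "length ((x,n)#ws) \<le> Suc j"
        using that by auto
      then have "\<rho> x n u \<in> {aw ws | ws. (\<forall>p\<in>set ws. snd p < 0) \<and> length ws \<le> Suc j}" by blast
      then show ?case by (auto intro: V.span_base)
    qed
    then show ?thesis by simp
  qed
  then show ?case unfolding FS using Suc m
    by (intro V.span_minimal) auto
qed

lemma main:
  assumes m: "m \<ge> 1"
  shows "F m = N m"
proof
  show "F m \<subseteq> N m"
  proof -
    have fm: "F m = V.span (F (m-1) \<union> {\<rho> x n w | x n w. n < 0 \<and> w \<in> F (m-1)})"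
      using FS[of "m-1"] m by simp
    have "\<rho> x n w \<in> N m" if "n < 0" "w \<in> F (m-1)" for x n w
    proof -
      have "w \<in> V.span {aw ws | ws. (\<forall>p\<in>set ws. snd p < 0) \<and> length ws \<le> m - 1}"
        using F_words that by auto
      then have "w \<in> {w. \<rho> x n w \<in> N m}"
      proof (induction rule: V.span_induct)
        case base show ?case using pre_sub[OF V.subspace_span] by simp
      next
        case (step u)
        then obtain ws where ws: "u = aw ws" "\<forall>p\<in>set ws. snd p < 0" "length ws \<le> m - 1" by auto
        show ?case
        proof (cases "length ws = m - 1")
          case True
          have "aw (map E [] @ ((x,n)#ws)) \<in> N m"
            by (rule claimC[OF m order.refl, rule_format]) (use ws True that m in auto)
          then show ?thesis using ws by simp
        next
          case False
          then have "aw ((x,n)#ws) \<in> F (length ((x,n)#ws))" using F_neg[of n "aw ws" "length ws" x] word_F[of ws] ws that by simp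
          moreover have "F (length ((x,n)#ws)) \<subseteq> F (m-1)" using False ws by (intro F_mono_le) auto
          ultimately show ?thesis using ws by (auto intro: V.span_base)
        qed
      qed
      then show ?thesis by simp
    qed
    then show ?thesis unfolding fm by (intro V.span_minimal) (auto intro: V.span_base)
  qed
next
  show "N m \<subseteq> F m"
  proof (rule V.span_minimal[OF _ F_sub])
    have "F (m-1) \<subseteq> F m" by (rule F_mono_le) auto
    moreover have "Gs m \<subseteq> F m"
    proof
      fix u assume "u \<in> Gs m"
      then obtain ws "is" where w: "u = apply_word \<rho> ws (w_vec \<rho> e v0 is)"
        "\<forall>p\<in>set ws. snd p \<ge> 0" "length is = m" "\<forall>i\<in>set is. i \<le> - int m"
        unfolding Gs_def by blast
      have base: "w_vec \<rho> e v0 is \<in> F m"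
        using word_F[of "map E is"] w m unfolding w_vec_def by force
      have "\<forall>p\<in>set ws. snd p \<ge> 0 \<Longrightarrow> apply_word \<rho> ws (w_vec \<rho> e v0 is) \<in> F m"
      proof (induction ws)
        case Nil then show ?case using base by simp
      next
        case (Cons p ws) then show ?case by (cases p) (auto intro: stab)
      qed
      then show "u \<in> F m" using w by simp
    qed
    ultimately show "F (m - 1) \<union> Gs m \<subseteq> F m" by auto
  qed
qed

end


theorem corollary6p7:
  fixes sc :: "complex \<Rightarrow> 'g::ab_group_add \<Rightarrow> 'g" and br :: "'g \<Rightarrow> 'g \<Rightarrow> 'g"
    and e :: 'g and \<kappa> :: "'g \<Rightarrow> 'g \<Rightarrow> complex"
    and scv :: "complex \<Rightarrow> 'v::ab_group_add \<Rightarrow> 'v" and \<rho> :: "'g \<Rightarrow> int \<Rightarrow> 'v \<Rightarrow> 'v"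
    and v0 :: 'v and m :: nat
  assumes "simple_lie_algebra sc br" and "fin_dim sc"
    and "highest_root_vector sc br e"
    and "normalized_invariant_form sc br e \<kappa>"
    and "basic_rep sc br \<kappa> scv \<rho> v0"
    and "m \<ge> 1"
  shows "pbw_filt scv \<rho> v0 m =
     module.span scv (pbw_filt scv \<rho> v0 (m - 1) \<union>
       {apply_word \<rho> ws (w_vec \<rho> e v0 is) | ws is.
          (\<forall>p\<in>set ws. snd p \<ge> 0) \<and> length is = m \<and> sorted_wrt (\<ge>) is
          \<and> (\<forall>i\<in>set is. i \<le> - int m)})"
proof -
  obtain f where f: "br (br e f) e = sc 2 e"
    using assms(4) unfolding normalized_invariant_form_def by blast
  have la: "lie_algebra sc br" and id: "\<And>W. lie_ideal sc br W \<Longrightarrow> W = {0} \<or> W = UNIV"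
    using assms(1) unfolding simple_lie_algebra_def by auto
  have vg: "vector_space sc" using la unfolding lie_algebra_def by auto
  have enz: "e \<noteq> 0" using assms(3) unfolding highest_root_vector_def by auto
  have br: "vector_space scv"
    "\<And>x n a b u w. \<rho> x n (scv a u + scv b w) = scv a (\<rho> x n u) + scv b (\<rho> x n w)"
    "\<And>x y n a b u. \<rho> (sc a x + sc b y) n u = scv a (\<rho> x n u) + scv b (\<rho> y n u)"
    "\<And>x y m n u. \<rho> x m (\<rho> y n u) - \<rho> y n (\<rho> x m u)
           = \<rho> (br x y) (m + n) u + (if m + n = 0 then scv (of_int m * \<kappa> x y) u else 0)"
    "\<And>x n. n \<ge> 0 \<Longrightarrow> \<rho> x n v0 = 0"
    using assms(5) unfolding basic_rep_def by auto
  interpret C: ctx scv sc br \<kappa> \<rho> v0 e "br e f"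
    by (rule ctx.intro[OF br(1) vg], unfold_locales) (use br f enz id in auto)
  show ?thesis using C.main[OF assms(6)] unfolding C.Gs_def .
qed

end
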